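(* Let $|\psi\rangle\in\mathcal{H}'$ be a pure state and $\{(w_\mu,|\varphi_\mu\rangle)\}$ an ensemble of pure states of $\mathcal{H}'$ with probabilities $w_\mu\ge0$, $\sum_\mu w_\mu=1$, such that $$\sum_\mu w_\mu\,\mathcal{C}(|\varphi_\mu\rangle)\le\mathcal{C}(|\psi\rangle).$$ Then the transformation $|\psi\rangle\to\{(w_\mu,|\varphi_\mu\rangle)\}$ can be achieved by Z$_2$-invariant operations, i.e. there is a Z$_2$-invariant measurement $\{\mathcal{E}_\mu\}$ with $\mathcal{E}_\mu(|\psi\rangle\langle\psi|)=w_\mu|\varphi_\mu\rangle\langle\varphi_\mu|$ for every $\mu$.
   Context: $\mathcal{H}'$ is a two-dimensional Hilbert space with orthonormal basis $|0\rangle,|1\rangle$; $\pi=|0\rangle\langle0|-|1\rangle\langle1|$. A Z$_2$-invariant operation is a completely positive, trace-nonincreasing linear map $\mathcal{E}$ on operators on $\mathcal{H}'$ with $\mathcal{E}(\pi X\pi)=\pi\mathcal{E}(X)\pi$ for all $X$. A Z$_2$-invariant measurement is a (countable) family $\{\mathcal{E}_\mu\}$ of Z$_2$-invariant operations whose sum is trace-preserving. For a pure state $|\chi\rangle$, $\mathcal{C}(|\chi\rangle)=2\min\{|\langle0|\chi\rangle|^2,|\langle1|\chi\rangle|^2\}$. *)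

theory Defs
  imports "HOL-Analysis.Analysis"
begin

text \<open>The qubit space H' = C^2 with orthonormal basis indexed by bool:
  False stands for |0>, True stands for |1>.\<close>

type_synonym qvec = "bool \<Rightarrow> complex"
type_synonym qop = "bool \<Rightarrow> bool \<Rightarrow> complex"

definition qtrace :: "qop \<Rightarrow> complex" where
  "qtrace X = X False False + X True True"

definition normalized :: "qvec \<Rightarrow> bool" where
  "normalized v \<longleftrightarrow> (cmod (v False))^2 + (cmod (v True))^2 = 1"

definition proj :: "qvec \<Rightarrow> qop" where
  "proj v = (\<lambda>i j. v i * cnj (v j))"

text \<open>pi = |0><0| - |1><1|; sgn_pi gives its diagonal entries.\<close>
definition sgn_pi :: "bool \<Rightarrow> complex" where
  "sgn_pi i = (if i then -1 else 1)"

definition pi_conj :: "qop \<Rightarrow> qop" where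
  "pi_conj X = (\<lambda>i j. sgn_pi i * X i j * sgn_pi j)"

definition psd_on :: "'a set \<Rightarrow> ('a \<Rightarrow> 'a \<Rightarrow> complex) \<Rightarrow> bool" where
  "psd_on A M \<longleftrightarrow> (\<forall>v. let q = (\<Sum>a\<in>A. \<Sum>b\<in>A. cnj (v a) * M a b * v b)
                        in Im q = 0 \<and> Re q \<ge> 0)"

definition qlinear :: "(qop \<Rightarrow> qop) \<Rightarrow> bool" where
  "qlinear E \<longleftrightarrow> (\<forall>X Y. E (\<lambda>i j. X i j + Y i j) = (\<lambda>i j. E X i j + E Y i j))
               \<and> (\<forall>c X. E (\<lambda>i j. c * X i j) = (\<lambda>i j. c * E X i j))"

text \<open>Complete positivity: id_k (x) E is positive for every k, where operators on
  C^k (x) H' are matrices indexed by {..<k} \<times> bool and (id_k (x) E) acts blockwise.\<close>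
definition completely_positive :: "(qop \<Rightarrow> qop) \<Rightarrow> bool" where
  "completely_positive E \<longleftrightarrow>
     (\<forall>(k::nat) (M :: nat \<times> bool \<Rightarrow> nat \<times> bool \<Rightarrow> complex).
        psd_on ({..<k} \<times> UNIV) M \<longrightarrow>
        psd_on ({..<k} \<times> UNIV)
          (\<lambda>(a, x) (b, y). E (\<lambda>x' y'. M (a, x') (b, y')) x y))"

definition trace_nonincreasing :: "(qop \<Rightarrow> qop) \<Rightarrow> bool" where
  "trace_nonincreasing E \<longleftrightarrow> (\<forall>X. psd_on UNIV X \<longrightarrow> Re (qtrace (E X)) \<le> Re (qtrace X))"

definition Z2_operation :: "(qop \<Rightarrow> qop) \<Rightarrow> bool" where
  "Z2_operation E \<longleftrightarrow> qlinear E \<and> completely_positive E \<and> trace_nonincreasing E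
     \<and> (\<forall>X. E (pi_conj X) = pi_conj (E X))"

definition Z2_measurement :: "'i set \<Rightarrow> ('i \<Rightarrow> qop \<Rightarrow> qop) \<Rightarrow> bool" where
  "Z2_measurement I E \<longleftrightarrow> countable I \<and> (\<forall>\<mu>\<in>I. Z2_operation (E \<mu>))
     \<and> (\<forall>X. ((\<lambda>\<mu>. qtrace (E \<mu> X)) has_sum qtrace X) I)"

definition coh :: "qvec \<Rightarrow> real" where
  "coh v = 2 * min ((cmod (v False))^2) ((cmod (v True))^2)"

end

theory Submission
  imports Defs
begin

definition Kop :: "(bool \<Rightarrow> complex) \<Rightarrow> (bool \<Rightarrow> complex) \<Rightarrow> qop \<Rightarrow> qop" where
  "Kop k l X = (\<lambda>i j. k i * X i j * cnj (k j) + l i * X (\<not>i) (\<not>j) * cnj (l j))"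

definition Qf :: "'a set \<Rightarrow> ('a \<Rightarrow> 'a \<Rightarrow> complex) \<Rightarrow> ('a \<Rightarrow> complex) \<Rightarrow> complex" where
  "Qf A M v = (\<Sum>a\<in>A. \<Sum>b\<in>A. cnj (v a) * M a b * v b)"

lemma psd_on_Qf: "psd_on A M \<longleftrightarrow> (\<forall>v. Im (Qf A M v) = 0 \<and> Re (Qf A M v) \<ge> 0)"
  unfolding psd_on_def Qf_def Let_def by simp

lemma Qf_add: "Qf A (\<lambda>p q. M1 p q + M2 p q) v = Qf A M1 v + Qf A M2 v"
  unfolding Qf_def by (simp add: distrib_left distrib_right sum.distrib)

lemma Qf_reindex:
  fixes g :: "bool \<Rightarrow> bool" and c :: "bool \<Rightarrow> complex" and v :: "nat \<times> bool \<Rightarrow> complex"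
  assumes inv: "\<And>x. g (g x) = x"
  shows "Qf ({..<n}\<times>UNIV) (\<lambda>(a,x) (b,y). c x * M (a, g x) (b, g y) * cnj (c y)) v
       = Qf ({..<n}\<times>UNIV) M (\<lambda>(a,z). cnj (c (g z)) * v (a, g z))"
proof -
  let ?A = "{..<n} \<times> (UNIV::bool set)"
  define h where "h = (\<lambda>(a::nat,x::bool). (a, g x))"
  have hA: "\<And>p. p \<in> ?A \<Longrightarrow> h p \<in> ?A" and hh: "\<And>p. h (h p) = p"
    using inv by (auto simp: h_def)
  have re: "\<And>F. (\<Sum>p\<in>?A. F p) = (\<Sum>p\<in>?A. F (h p))"
    by (rule sum.reindex_bij_witness[of _ h h]) (auto simp: hh hA)
  have re2: "(\<Sum>p\<in>?A. \<Sum>q\<in>?A. G p q) = (\<Sum>p\<in>?A. \<Sum>q\<in>?A. G (h p) (h q))" for G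
    using re[of "\<lambda>p. \<Sum>q\<in>?A. G p q"] re[of "G (h p)" for p] by simp
  show ?thesis
    unfolding Qf_def
    apply (subst (2) re2)
    apply (rule sum.cong[OF refl])+
    by (auto simp: h_def inv)
qed

lemma Kop_linear: "qlinear (Kop k l)"
  unfolding qlinear_def Kop_def by (auto simp: fun_eq_iff algebra_simps)

lemma Kop_cov: "Kop k l (pi_conj X) = pi_conj (Kop k l X)"
  unfolding Kop_def pi_conj_def sgn_pi_def by (auto simp: fun_eq_iff algebra_simps)

lemma Kop_cp: "completely_positive (Kop k l)"
  unfolding completely_positive_def
proof (intro allI impI)
  fix n :: nat and M :: "nat \<times> bool \<Rightarrow> nat \<times> bool \<Rightarrow> complex"
  assume psd: "psd_on ({..<n}\<times>UNIV) M"
  have eq: "(\<lambda>(a,x) (b,y). Kop k l (\<lambda>x' y'. M (a,x') (b,y')) x y)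
     = (\<lambda>p q. (\<lambda>(a,x) (b,y). k x * M (a, id x) (b, id y) * cnj (k y)) p q
            + (\<lambda>(a,x) (b,y). l x * M (a, Not x) (b, Not y) * cnj (l y)) p q)"
    by (auto simp: Kop_def fun_eq_iff)
  show "psd_on ({..<n}\<times>UNIV) (\<lambda>(a,x) (b,y). Kop k l (\<lambda>x' y'. M (a,x') (b,y')) x y)"
  proof (unfold eq psd_on_Qf Qf_add, intro allI)
    fix v
    have 1: "Qf ({..<n}\<times>UNIV) (\<lambda>(a,x) (b,y). k x * M (a, id x) (b, id y) * cnj (k y)) v
       = Qf ({..<n}\<times>UNIV) M (\<lambda>(a,z). cnj (k (id z)) * v (a, id z))"
      by (rule Qf_reindex) simp
    have 2: "Qf ({..<n}\<times>UNIV) (\<lambda>(a,x) (b,y). l x * M (a, Not x) (b, Not y) * cnj (l y)) v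
       = Qf ({..<n}\<times>UNIV) M (\<lambda>(a,z). cnj (l (Not z)) * v (a, Not z))"
      by (rule Qf_reindex) simp
    from psd have "\<And>u. Im (Qf ({..<n}\<times>UNIV) M u) = 0 \<and> Re (Qf ({..<n}\<times>UNIV) M u) \<ge> 0"
      unfolding psd_on_Qf by blast
    then show "Im (Qf ({..<n}\<times>UNIV) (\<lambda>(a,x) (b,y). k x * M (a, id x) (b, id y) * cnj (k y)) v +
             Qf ({..<n}\<times>UNIV) (\<lambda>(a,x) (b,y). l x * M (a, Not x) (b, Not y) * cnj (l y)) v) = 0 \<and>
          0 \<le> Re (Qf ({..<n}\<times>UNIV) (\<lambda>(a,x) (b,y). k x * M (a, id x) (b, id y) * cnj (k y)) v +
             Qf ({..<n}\<times>UNIV) (\<lambda>(a,x) (b,y). l x * M (a, Not x) (b, Not y) * cnj (l y)) v)"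
      unfolding 1 2 by (simp only: plus_complex.sel) (meson add_nonneg_nonneg add_0)
  qed
qed

lemma cnj_sq: "z * x * cnj z = complex_of_real ((cmod z)^2) * x"
proof -
  have "z * x * cnj z = (z * cnj z) * x" by (simp add: mult_ac)
  also have "z * cnj z = complex_of_real ((cmod z)^2)" by (rule complex_norm_square[symmetric])
  finally show ?thesis .
qed

lemma Kop_trace: "qtrace (Kop k l X) =
   complex_of_real ((cmod (k False))^2 + (cmod (l True))^2) * X False False
 + complex_of_real ((cmod (k True))^2 + (cmod (l False))^2) * X True True"
  unfolding qtrace_def Kop_def
  by (simp only: cnj_sq not_True_eq_False not_False_eq_True) (simp add: algebra_simps)

lemma psd_diag: fixes X :: qop assumes "psd_on UNIV X" shows "Im (X i i) = 0 \<and> Re (X i i) \<ge> 0"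
proof -
  from assms have "Im (Qf UNIV X (\<lambda>j. if j = i then 1 else 0)) = 0 \<and> Re (Qf UNIV X (\<lambda>j. if j = i then 1 else 0)) \<ge> 0"
    unfolding psd_on_Qf by blast
  moreover have "Qf UNIV X (\<lambda>j. if j = i then 1 else 0) = X i i"
    unfolding Qf_def by (cases i) (simp_all add: UNIV_bool)
  ultimately show ?thesis by simp
qed

lemma Kop_tni:
  assumes "(cmod (k False))^2 + (cmod (l True))^2 \<le> 1" "(cmod (k True))^2 + (cmod (l False))^2 \<le> 1"
  shows "trace_nonincreasing (Kop k l)"
  unfolding trace_nonincreasing_def
proof (intro allI impI)
  fix X :: qop assume "psd_on UNIV X"
  from psd_diag[OF this, of False] psd_diag[OF this, of True]
  have a: "Re (X False False) \<ge> 0" "Re (X True True) \<ge> 0" by auto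
  have "Re (qtrace (Kop k l X)) = ((cmod (k False))^2 + (cmod (l True))^2) * Re (X False False)
     + ((cmod (k True))^2 + (cmod (l False))^2) * Re (X True True)"
    unfolding Kop_trace by simp
  also have "\<dots> \<le> 1 * Re (X False False) + 1 * Re (X True True)"
    by (intro add_mono mult_right_mono assms a)
  finally show "Re (qtrace (Kop k l X)) \<le> Re (qtrace X)" by (simp add: qtrace_def)
qed

lemma Kop_proj:
  assumes "\<And>i. k i * \<psi> i = complex_of_real s * \<phi> i" "\<And>i. l i * \<psi> (\<not> i) = complex_of_real t * \<phi> i"
    and "s^2 + t^2 = w"
  shows "Kop k l (proj \<psi>) = (\<lambda>i j. complex_of_real w * proj \<phi> i j)"
proof (intro ext)
  fix i j
  have "Kop k l (proj \<psi>) i j = (k i * \<psi> i) * cnj (k j * \<psi> j) + (l i * \<psi> (\<not>i)) * cnj (l j * \<psi> (\<not>j))"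
    by (simp add: Kop_def proj_def algebra_simps)
  also have "\<dots> = complex_of_real (s^2 + t^2) * (\<phi> i * cnj (\<phi> j))"
    by (simp only: assms(1,2)) (simp add: algebra_simps power2_eq_square)
  finally show "Kop k l (proj \<psi>) i j = complex_of_real w * proj \<phi> i j"
    using assms(3) by (simp add: proj_def)
qed

lemma single_le_has_sum:
  fixes g :: "'a \<Rightarrow> real"
  assumes "(g has_sum S) I" "\<And>x. x \<in> I \<Longrightarrow> g x \<ge> 0" "\<mu> \<in> I"
  shows "g \<mu> \<le> S"
proof -
  have "((\<lambda>x. g x) has_sum g \<mu>) {\<mu>}" using has_sum_finite[of "{\<mu>}" g] by simp
  from has_sum_mono_neutral[OF this assms(1)] assms show ?thesis by auto
qed


theorem theorem13:
  fixes \<psi> :: qvec and I :: "'i set" and w :: "'i \<Rightarrow> real" and \<phi> :: "'i \<Rightarrow> qvec"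
  assumes "normalized \<psi>"
    and "countable I"
    and "\<forall>\<mu>\<in>I. w \<mu> \<ge> 0 \<and> normalized (\<phi> \<mu>)"
    and "(w has_sum 1) I"
    and "(\<Sum>\<^sub>\<infinity>\<mu>\<in>I. w \<mu> * coh (\<phi> \<mu>)) \<le> coh \<psi>"
  shows "\<exists>E. Z2_measurement I E \<and>
           (\<forall>\<mu>\<in>I. E \<mu> (proj \<psi>) = (\<lambda>i j. complex_of_real (w \<mu>) * proj (\<phi> \<mu>) i j))"
proof -
  define \<alpha> where "\<alpha> = \<psi> False"
  define \<beta> where "\<beta> = \<psi> True"
  define p where "p = (cmod \<alpha>)^2"
  have np: "(cmod \<beta>)^2 = 1 - p" using assms(1) unfolding normalized_def p_def \<alpha>_def \<beta>_def by simp
  define q where "q \<mu> = (cmod (\<phi> \<mu> False))^2" for \<mu>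
  have nq: "(cmod (\<phi> \<mu> True))^2 = 1 - q \<mu>" if "\<mu> \<in> I" for \<mu>
    using assms(3) that unfolding normalized_def q_def by force
  define m where "m \<mu> = min (q \<mu>) (1 - q \<mu>)" for \<mu>
  have cohphi: "coh (\<phi> \<mu>) = 2 * m \<mu>" if "\<mu> \<in> I" for \<mu>
    using nq[OF that] unfolding coh_def m_def q_def by simp
  have cohpsi: "coh \<psi> = 2 * min p (1 - p)"
    using np unfolding coh_def p_def \<alpha>_def \<beta>_def by simp
  have w0: "w \<mu> \<ge> 0" if "\<mu> \<in> I" for \<mu> using assms(3) that by blast
  have q01: "0 \<le> q \<mu> \<and> q \<mu> \<le> 1" if "\<mu> \<in> I" for \<mu>
    using nq[OF that] unfolding q_def by (smt (verit) zero_le_power2)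
  have p01: "0 \<le> p \<and> p \<le> 1" using np unfolding p_def by (smt (verit) zero_le_power2)
  have m0: "0 \<le> m \<mu> \<and> m \<mu> \<le> 1/2" if "\<mu> \<in> I" for \<mu>
    using q01[OF that] unfolding m_def by (auto simp: min_def)
  have wm_summ: "(\<lambda>\<mu>. w \<mu> * m \<mu>) summable_on I"
  proof (rule summable_on_comparison_test[OF has_sum_imp_summable[OF assms(4)]])
    fix \<mu> assume "\<mu> \<in> I"
    then have a: "0 \<le> w \<mu>" "0 \<le> m \<mu>" "m \<mu> \<le> 1" using w0 m0 by force+
    then show "w \<mu> * m \<mu> \<le> w \<mu>" "0 \<le> w \<mu> * m \<mu>"
      by (simp_all add: mult_left_le)
  qed
  define A where "A = (\<Sum>\<^sub>\<infinity>\<mu>\<in>I. w \<mu> * m \<mu>)"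
  have Ahs: "((\<lambda>\<mu>. w \<mu> * m \<mu>) has_sum A) I"
    using wm_summ unfolding A_def by simp
  have A0: "A \<ge> 0"
    by (rule has_sum_nonneg[OF Ahs]) (use w0 m0 in auto)
  have "((\<lambda>\<mu>. w \<mu> * coh (\<phi> \<mu>)) has_sum (2 * A)) I"
    using has_sum_cmult_right[OF Ahs, of 2] by (subst has_sum_cong[where g="\<lambda>\<mu>. 2 * (w \<mu> * m \<mu>)"]) (auto simp: cohphi)
  then have "(\<Sum>\<^sub>\<infinity>\<mu>\<in>I. w \<mu> * coh (\<phi> \<mu>)) = 2 * A" by (rule infsumI)
  with assms(5) cohpsi have Ale: "A \<le> min p (1 - p)" by simp
  define \<theta> where "\<theta> = (p - A) / (1 - 2 * A)"
  have th01: "0 \<le> \<theta> \<and> \<theta> \<le> 1"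
  proof (cases "A = 1/2")
    case True then have "1 - 2 * A = 0" by simp
    then show ?thesis by (simp add: \<theta>_def)
  next
    case False
    with Ale have "1 - 2 * A > 0" by simp
    with Ale show ?thesis unfolding \<theta>_def by (simp add: field_simps)
  qed
  have theq: "(1 - 2 * \<theta>) * A + \<theta> = p"
  proof (cases "A = 1/2")
    case True then have "1 - 2 * A = 0" by simp
    with True show ?thesis using Ale by (simp add: \<theta>_def)
  next
    case False
    with Ale have "1 - 2 * A \<noteq> 0" by simp
    then have "\<theta> * (1 - 2 * A) = p - A" unfolding \<theta>_def by simp
    moreover have "(1 - 2 * \<theta>) * A + \<theta> = A + \<theta> * (1 - 2 * A)" by (simp add: algebra_simps)
    ultimately show ?thesis by simp
  qed
  define x where "x \<mu> = (if q \<mu> \<le> 1/2 then 1 - \<theta> else \<theta>)" for \<mu>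
  have x01: "0 \<le> x \<mu> \<and> x \<mu> \<le> 1" for \<mu> using th01 unfolding x_def by auto
  define s where "s \<mu> = sqrt (w \<mu> * x \<mu>)" for \<mu>
  define t where "t \<mu> = sqrt (w \<mu> * (1 - x \<mu>))" for \<mu>
  have s2: "(s \<mu>)^2 = w \<mu> * x \<mu>" and t2: "(t \<mu>)^2 = w \<mu> * (1 - x \<mu>)" if "\<mu> \<in> I" for \<mu>
    using w0[OF that] x01[of \<mu>] unfolding s_def t_def by simp_all
  have fx: "w \<mu> * (x \<mu> * q \<mu> + (1 - x \<mu>) * (1 - q \<mu>)) = (1 - 2 * \<theta>) * (w \<mu> * m \<mu>) + \<theta> * w \<mu>" for \<mu>
    unfolding x_def m_def by (auto simp: algebra_simps)
  define k where "k \<mu> = (\<lambda>i. if i then (if \<beta> = 0 then complex_of_real (sqrt (w \<mu>)) else complex_of_real (s \<mu>) * \<phi> \<mu> True / \<beta>)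
       else (if \<alpha> = 0 then complex_of_real (sqrt (w \<mu>)) else complex_of_real (s \<mu>) * \<phi> \<mu> False / \<alpha>))" for \<mu>
  define l where "l \<mu> = (\<lambda>i. if i then complex_of_real (t \<mu>) * \<phi> \<mu> True / \<alpha> else complex_of_real (t \<mu>) * \<phi> \<mu> False / \<beta>)" for \<mu>
  define D0 where "D0 \<mu> = (cmod (k \<mu> False))^2 + (cmod (l \<mu> True))^2" for \<mu>
  define D1 where "D1 \<mu> = (cmod (k \<mu> True))^2 + (cmod (l \<mu> False))^2" for \<mu>
  have D0hs: "(D0 has_sum 1) I"
  proof (cases "\<alpha> = 0")
    case True
    then show ?thesis using assms(4) w0
      by (subst has_sum_cong[where g=w]) (auto simp: D0_def k_def l_def)
  next
    case False
    then have pp: "p > 0" unfolding p_def by simp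
    have "D0 \<mu> = ((1 - 2 * \<theta>) * (w \<mu> * m \<mu>) + \<theta> * w \<mu>) / p" if "\<mu> \<in> I" for \<mu>
    proof -
      have "D0 \<mu> = ((s \<mu>)^2 * q \<mu> + (t \<mu>)^2 * (1 - q \<mu>)) / p"
        using False nq[OF that] unfolding D0_def k_def l_def q_def p_def
        by (simp add: norm_mult norm_divide power_mult_distrib power_divide add_divide_distrib)
      also have "\<dots> = w \<mu> * (x \<mu> * q \<mu> + (1 - x \<mu>) * (1 - q \<mu>)) / p"
        by (simp add: s2[OF that] t2[OF that] algebra_simps)
      finally show ?thesis by (simp add: fx)
    qed
    moreover have "((\<lambda>\<mu>. ((1 - 2 * \<theta>) * (w \<mu> * m \<mu>) + \<theta> * w \<mu>) / p) has_sum (((1 - 2 * \<theta>) * A + \<theta> * 1) / p)) I"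
      by (intro has_sum_divide_const has_sum_add has_sum_cmult_right Ahs assms(4))
    ultimately show ?thesis using theq pp by (subst has_sum_cong) auto
  qed
  have D1hs: "(D1 has_sum 1) I"
  proof (cases "\<beta> = 0")
    case True
    then show ?thesis using assms(4) w0
      by (subst has_sum_cong[where g=w]) (auto simp: D1_def k_def l_def)
  next
    case False
    then have pp: "1 - p > 0" using np by (metis zero_less_norm_iff zero_less_power)
    have e: "D1 \<mu> = ((2 * \<theta> - 1) * (w \<mu> * m \<mu>) + (1 - \<theta>) * w \<mu>) / (1 - p)" if "\<mu> \<in> I" for \<mu>
    proof -
      have "D1 \<mu> = ((s \<mu>)^2 * (1 - q \<mu>) + (t \<mu>)^2 * q \<mu>) / (1 - p)"
        using False nq[OF that] np unfolding D1_def k_def l_def q_def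
        by (simp add: norm_mult norm_divide power_mult_distrib power_divide add_divide_distrib)
      also have "\<dots> = (w \<mu> - w \<mu> * (x \<mu> * q \<mu> + (1 - x \<mu>) * (1 - q \<mu>))) / (1 - p)"
        by (simp add: s2[OF that] t2[OF that] algebra_simps)
      also have "\<dots> = ((2 * \<theta> - 1) * (w \<mu> * m \<mu>) + (1 - \<theta>) * w \<mu>) / (1 - p)"
        by (simp only: fx) (simp add: algebra_simps)
      finally show ?thesis .
    qed
    have hs: "((\<lambda>\<mu>. ((2 * \<theta> - 1) * (w \<mu> * m \<mu>) + (1 - \<theta>) * w \<mu>) / (1 - p)) has_sum (((2 * \<theta> - 1) * A + (1 - \<theta>) * 1) / (1 - p))) I"
      by (intro has_sum_divide_const has_sum_add has_sum_cmult_right Ahs assms(4))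
    have v: "((2 * \<theta> - 1) * A + (1 - \<theta>) * 1) / (1 - p) = 1"
      using theq pp by (simp add: algebra_simps)
    show ?thesis by (rule has_sum_cong[THEN iffD2, OF e hs[unfolded v]])
  qed
  have D0le: "D0 \<mu> \<le> 1" if "\<mu> \<in> I" for \<mu>
    by (rule single_le_has_sum[OF D0hs _ that]) (simp add: D0_def)
  have D1le: "D1 \<mu> \<le> 1" if "\<mu> \<in> I" for \<mu>
    by (rule single_le_has_sum[OF D1hs _ that]) (simp add: D1_def)
  define E where "E \<mu> = Kop (k \<mu>) (l \<mu>)" for \<mu>
  have meas: "Z2_measurement I E"
    unfolding Z2_measurement_def
  proof (intro conjI ballI allI)
    show "countable I" by (rule assms(2))
  next
    fix \<mu> assume "\<mu> \<in> I"
    show "Z2_operation (E \<mu>)"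
      unfolding Z2_operation_def E_def
      using Kop_linear Kop_cp Kop_cov Kop_tni D0le[OF \<open>\<mu> \<in> I\<close>] D1le[OF \<open>\<mu> \<in> I\<close>]
      unfolding D0_def D1_def by blast
  next
    fix X :: qop
    have "((\<lambda>\<mu>. complex_of_real (D0 \<mu>) * X False False + complex_of_real (D1 \<mu>) * X True True)
          has_sum (complex_of_real 1 * X False False + complex_of_real 1 * X True True)) I"
      by (intro has_sum_add has_sum_cmult_left has_sum_of_real D0hs D1hs)
    then show "((\<lambda>\<mu>. qtrace (E \<mu> X)) has_sum qtrace X) I"
      unfolding E_def Kop_trace by (simp add: D0_def D1_def qtrace_def)
  qed
  have degA: "complex_of_real (s \<mu>) * \<phi> \<mu> False = 0 \<and> complex_of_real (t \<mu>) * \<phi> \<mu> True = 0"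
    if "\<mu> \<in> I" "\<alpha> = 0" for \<mu>
  proof -
    have p0: "p = 0" using that(2) unfolding p_def by simp
    with Ale A0 have A00: "A = 0" by simp
    then have th0: "\<theta> = 0" using p0 unfolding \<theta>_def by simp
    have "w \<mu> * m \<mu> \<le> A"
      by (rule single_le_has_sum[OF Ahs _ that(1)]) (use w0 m0 in auto)
    with A00 w0[OF that(1)] m0[OF that(1)] have "w \<mu> = 0 \<or> m \<mu> = 0"
      by (metis antisym mult_nonneg_nonneg mult_eq_0_iff)
    moreover have "q \<mu> = 0 \<Longrightarrow> \<phi> \<mu> False = 0" unfolding q_def by simp
    moreover have "q \<mu> = 1 \<Longrightarrow> \<phi> \<mu> True = 0" using nq[OF that(1)] by simp
    ultimately show ?thesis
      unfolding s_def t_def x_def m_def th0 by (auto simp: min_def split: if_splits)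
  qed
  have degB: "complex_of_real (s \<mu>) * \<phi> \<mu> True = 0 \<and> complex_of_real (t \<mu>) * \<phi> \<mu> False = 0"
    if "\<mu> \<in> I" "\<beta> = 0" for \<mu>
  proof -
    have p0: "p = 1" using that(2) np by simp
    with Ale A0 have A00: "A = 0" by simp
    then have th0: "\<theta> = 1" using p0 unfolding \<theta>_def by simp
    have "w \<mu> * m \<mu> \<le> A"
      by (rule single_le_has_sum[OF Ahs _ that(1)]) (use w0 m0 in auto)
    with A00 w0[OF that(1)] m0[OF that(1)] have "w \<mu> = 0 \<or> m \<mu> = 0"
      by (metis antisym mult_nonneg_nonneg mult_eq_0_iff)
    moreover have "q \<mu> = 0 \<Longrightarrow> \<phi> \<mu> False = 0" unfolding q_def by simp
    moreover have "q \<mu> = 1 \<Longrightarrow> \<phi> \<mu> True = 0" using nq[OF that(1)] by simp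
    ultimately show ?thesis
      unfolding s_def t_def x_def m_def th0 by (auto simp: min_def split: if_splits)
  qed
  have "E \<mu> (proj \<psi>) = (\<lambda>i j. complex_of_real (w \<mu>) * proj (\<phi> \<mu>) i j)" if "\<mu> \<in> I" for \<mu>
    unfolding E_def
  proof (rule Kop_proj)
    show "(s \<mu>)^2 + (t \<mu>)^2 = w \<mu>" using s2[OF that] t2[OF that] by (simp add: algebra_simps)
  next
    fix i
    show "k \<mu> i * \<psi> i = complex_of_real (s \<mu>) * \<phi> \<mu> i"
      using degA[OF that] degB[OF that] unfolding k_def \<alpha>_def \<beta>_def
      by (cases i) auto
    show "l \<mu> i * \<psi> (\<not> i) = complex_of_real (t \<mu>) * \<phi> \<mu> i"
      using degA[OF that] degB[OF that] unfolding l_def \<alpha>_def \<beta>_def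
      by (cases i) auto
  qed
  with meas show ?thesis by blast
qed

end
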